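(* Let $K$ be a $15$-vertex $\mathbb{F}_2$-homology $8$-manifold that satisfies complementarity. Then $K$ has exactly $490$ eight-dimensional simplices.
   Context: A finite simplicial complex $K$ on vertex set $V$ is an $\mathbb{F}_2$-homology $d$-manifold if every simplex lies in a $d$-simplex and for every nonempty simplex $\sigma$ with $\dim\sigma<d$, $H_*(\mathrm{link}(\sigma,K);\mathbb{F}_2)\cong H_*(S^{d-\dim\sigma-1};\mathbb{F}_2)$, where $\mathrm{link}(\sigma,K)=\{\tau\in K:\tau\cap\sigma=\varnothing,\ \tau\cup\sigma\in K\}$. $K$ satisfies complementarity if for every $\sigma\subseteq V$ exactly one of $\sigma$, $V\setminus\sigma$ is a simplex of $K$. *)

theory Defs
  imports Main HOL.Vector_Spaces "HOL-Library.Z2" "HOL-Library.Function_Algebras"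
begin

text \<open>Simplicial chains with F2 coefficients are
  functions from vertex sets to bit supported on the faces of the given dimension.\<close>

definition simplicial_complex_on :: "'a set \<Rightarrow> 'a set set \<Rightarrow> bool" where
  "simplicial_complex_on V K \<longleftrightarrow> finite V \<and> K \<subseteq> Pow V \<and> K \<noteq> {} \<and>
     (\<forall>s\<in>K. \<forall>t. t \<subseteq> s \<longrightarrow> t \<in> K)"

definition faces :: "'a set set \<Rightarrow> nat \<Rightarrow> 'a set set" where
  "faces K i = {s \<in> K. card s = i + 1}"

definition link :: "'a set \<Rightarrow> 'a set set \<Rightarrow> 'a set set" where
  "link \<sigma> K = {\<tau> \<in> K. \<tau> \<inter> \<sigma> = {} \<and> \<tau> \<union> \<sigma> \<in> K}"

definition scaleF :: "bit \<Rightarrow> ('a set \<Rightarrow> bit) \<Rightarrow> ('a set \<Rightarrow> bit)" where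
  "scaleF c f = (\<lambda>x. c * f x)"

definition chains :: "'a set set \<Rightarrow> nat \<Rightarrow> ('a set \<Rightarrow> bit) set" where
  "chains K i = {c. \<forall>s. c s \<noteq> 0 \<longrightarrow> s \<in> faces K i}"

text \<open>simplicial boundary map C_i \<rightarrow> C_(i-1) over F2 (signs are irrelevant);
  the boundary of 0-chains is 0 (unreduced homology)\<close>
fun bd :: "'a set set \<Rightarrow> nat \<Rightarrow> ('a set \<Rightarrow> bit) \<Rightarrow> ('a set \<Rightarrow> bit)" where
  "bd K 0 c = 0"
| "bd K (Suc i) c = (\<lambda>t. if t \<in> faces K i
       then (\<Sum>s\<in>{s \<in> faces K (Suc i). t \<subseteq> s}. c s) else 0)"

definition cycles :: "'a set set \<Rightarrow> nat \<Rightarrow> ('a set \<Rightarrow> bit) set" where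
  "cycles K i = {c \<in> chains K i. bd K i c = 0}"

definition boundaries :: "'a set set \<Rightarrow> nat \<Rightarrow> ('a set \<Rightarrow> bit) set" where
  "boundaries K i = bd K (Suc i) ` chains K (Suc i)"

definition betti :: "'a set set \<Rightarrow> nat \<Rightarrow> nat" where
  "betti K i = vector_space.dim scaleF (cycles K i) - vector_space.dim scaleF (boundaries K i)"

text \<open>the standard triangulation of S^k: boundary of the (k+1)-simplex on {0..k+1}\<close>
definition sphere_complex :: "nat \<Rightarrow> nat set set" where
  "sphere_complex k = {s. s \<subseteq> {0..k+1} \<and> s \<noteq> {0..k+1}}"

text \<open>H_*(L;F2) \<cong> H_*(S^k;F2): finite-dimensional F2-vector spaces are isomorphic iff
  their dimensions agree\<close>
definition F2_homology_sphere :: "'a set set \<Rightarrow> nat \<Rightarrow> bool" where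
  "F2_homology_sphere L k \<longleftrightarrow> (\<forall>i. betti L i = betti (sphere_complex k) i)"

definition F2_homology_manifold :: "nat \<Rightarrow> 'a set set \<Rightarrow> bool" where
  "F2_homology_manifold d K \<longleftrightarrow>
     (\<forall>\<sigma>\<in>K. \<exists>\<tau>\<in>K. \<sigma> \<subseteq> \<tau> \<and> card \<tau> = d + 1) \<and>
     (\<forall>\<sigma>\<in>K. \<sigma> \<noteq> {} \<and> card \<sigma> - 1 < d \<longrightarrow>
        F2_homology_sphere (link \<sigma> K) (d - (card \<sigma> - 1) - 1))"

definition complementarity :: "'a set \<Rightarrow> 'a set set \<Rightarrow> bool" where
  "complementarity V K \<longleftrightarrow> (\<forall>\<sigma>. \<sigma> \<subseteq> V \<longrightarrow> (\<sigma> \<in> K \<longleftrightarrow> V - \<sigma> \<notin> K))"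

end

theory Submission
  imports Defs
begin

context vector_space begin

lemma span_inter_zero:
  assumes "independent (A \<union> C)" "A \<inter> C = {}" "finite A" "finite C"
    and "x \<in> span A" "x \<in> span C"
  shows "x = 0"
proof -
  obtain u where u: "x = (\<Sum>v\<in>A. u v *s v)" using assms(3,5) span_finite by auto
  obtain w where w: "x = (\<Sum>v\<in>C. w v *s v)" using assms(4,6) span_finite by auto
  define r where "r v = (if v \<in> A then u v else - w v)" for v
  have "(\<Sum>v\<in>A \<union> C. r v *s v) = (\<Sum>v\<in>A. r v *s v) + (\<Sum>v\<in>C. r v *s v)"
    using assms(2,3,4) by (simp add: sum.union_disjoint)
  also have "(\<Sum>v\<in>A. r v *s v) = x" using u by (simp add: r_def)
  also have "(\<Sum>v\<in>C. r v *s v) = (\<Sum>v\<in>C. - (w v *s v))"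
    using assms(2) by (intro sum.cong) (auto simp: r_def)
  also have "\<dots> = - x" using w by (simp add: sum_negf)
  finally have "(\<Sum>v\<in>A \<union> C. r v *s v) = 0" by simp
  then have "\<forall>v\<in>A. r v = 0"
    using independentD[OF assms(1)] assms(3,4) by blast
  then show ?thesis using u by (simp add: r_def)
qed

lemma rank_nullity_sub:
  assumes lin: "Vector_Spaces.linear scale scale f" and S: "subspace S" and W: "S \<subseteq> span W" "finite W"
  shows "dim S = dim {x\<in>S. f x = 0} + dim (f ` S)"
proof -
  interpret lf: Vector_Spaces.linear scale scale f by (fact lin)
  let ?K = "{x\<in>S. f x = 0}"
  obtain A where A: "A \<subseteq> ?K" "independent A" "?K \<subseteq> span A" "card A = dim ?K"
    using basis_exists by blast
  have "A \<subseteq> S" using A by auto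
  then obtain B where B: "A \<subseteq> B" "B \<subseteq> S" "independent B" "S \<subseteq> span B"
    using maximal_independent_subset_extend A(2) by metis
  have fB: "finite B" using independent_span_bound[OF W(2) B(3)] B(2) W(1) by blast
  have dS: "dim S = card B" using basis_card_eq_dim B by simp
  define C where "C = B - A"
  have fC: "finite C" "finite A" using fB B(1) by (auto simp: C_def intro: finite_subset)
  have BAC: "B = A \<union> C" "A \<inter> C = {}" using B(1) by (auto simp: C_def)
  have inj0: "x = 0" if "x \<in> span C" "f x = 0" for x
  proof -
    have "span C \<subseteq> S" using B(2) S BAC by (metis Un_upper2 span_minimal subset_trans)
    then have "x \<in> span A" using that A(3) span_base by blast
    then show ?thesis using span_inter_zero[of A C x] B(3) BAC fC that by simp
  qed
  have injC: "inj_on f (span C)"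
    using inj0 lf.inj_on_iff_eq_0[OF subspace_span] by blast
  have indC: "independent C" using B(3) BAC independent_mono by blast
  have indfC: "independent (f ` C)" using lf.independent_injective_image[OF indC injC] .
  have cfC: "card (f ` C) = card C" using card_image injC span_base by (metis inj_on_subset subsetI)
  have fA0: "f ` A \<subseteq> {0}" using A(1) by auto
  have "f ` S \<subseteq> span (f ` C)"
  proof
    fix y assume "y \<in> f ` S"
    then obtain x where x: "x \<in> S" "y = f x" by auto
    then have "x \<in> span B" using B(4) by auto
    then have "y \<in> span (f ` B)" using x lf.span_image by auto
    moreover have "span (f ` B) \<subseteq> span (f ` C)"
    proof (rule span_minimal)
      show "f ` B \<subseteq> span (f ` C)" using BAC fA0 span_base span_zero by auto
    qed (rule subspace_span)
    ultimately show "y \<in> span (f ` C)" by auto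
  qed
  moreover have "f ` C \<subseteq> f ` S" using BAC B(2) by auto
  ultimately have "dim (f ` S) = card (f ` C)" using basis_card_eq_dim indfC by simp
  moreover have "dim ?K = card A" using A by simp
  ultimately show ?thesis using dS cfC BAC fC card_Un_disjoint by simp
qed

end

lemma vs_scaleF: "vector_space (scaleF :: bit \<Rightarrow> ('a set \<Rightarrow> bit) \<Rightarrow> ('a set \<Rightarrow> bit))"
  by unfold_locales (auto simp: scaleF_def fun_eq_iff algebra_simps)

interpretation VS: vector_space "scaleF :: bit \<Rightarrow> ('a set \<Rightarrow> bit) \<Rightarrow> ('a set \<Rightarrow> bit)"
  by (rule vs_scaleF)

lemma sum_fun_apply: "(\<Sum>x\<in>A. f x) y = (\<Sum>x\<in>A. f x y)"
  by (induction A rule: infinite_finite_induct) auto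

lemma lin_bd: "Vector_Spaces.linear scaleF scaleF (bd L i)"
proof (cases i)
  case 0
  then show ?thesis by (auto simp: linear_iff vs_scaleF scaleF_def fun_eq_iff)
next
  case (Suc j)
  then show ?thesis
    unfolding linear_iff
    by (simp add: vs_scaleF scaleF_def fun_eq_iff sum.distrib sum_distrib_left del: add_bit_eq_xor mult_bit_eq_and)
qed

definition delta :: "'a set \<Rightarrow> 'a set \<Rightarrow> bit" where
  "delta s = (\<lambda>x. if x = s then 1 else 0)"

lemma delta_inj: "inj delta"
  by (auto simp: inj_on_def delta_def fun_eq_iff split: if_splits)

lemma subspace_chains: "VS.subspace (chains L i)"
  by (auto simp: VS.subspace_def chains_def scaleF_def)

lemma chains_span:
  assumes "finite L"
  shows "chains L i \<subseteq> VS.span (delta ` faces L i)"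
proof -
  let ?E = "delta ` faces L i"
  have fin: "finite (faces L i)" using assms by (simp add: faces_def)
  show "chains L i \<subseteq> VS.span ?E"
  proof
    fix c assume c: "c \<in> chains L i"
    have "c = (\<Sum>s\<in>faces L i. scaleF (c s) (delta s))"
    proof
      fix x
      have "(\<Sum>s\<in>faces L i. scaleF (c s) (delta s)) x = (\<Sum>s\<in>faces L i. (if s = x then c x else 0))"
        unfolding sum_fun_apply by (intro sum.cong) (auto simp: scaleF_def delta_def)
      also have "\<dots> = c x" using c fin by (auto simp: chains_def)
      finally show "c x = (\<Sum>s\<in>faces L i. scaleF (c s) (delta s)) x" by simp
    qed
    also have "\<dots> \<in> VS.span ?E"
      by (intro VS.span_sum VS.span_scale VS.span_base) auto
    finally show "c \<in> VS.span ?E" .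
  qed
qed

lemma dim_chains:
  assumes "finite L"
  shows "VS.dim (chains L i) = card (faces L i)"
proof -
  let ?E = "delta ` faces L i"
  have fin: "finite (faces L i)" using assms by (simp add: faces_def)
  have E1: "?E \<subseteq> chains L i" by (auto simp: chains_def delta_def split: if_splits)
  have E2: "chains L i \<subseteq> VS.span ?E"
  proof
    fix c assume c: "c \<in> chains L i"
    have "c = (\<Sum>s\<in>faces L i. scaleF (c s) (delta s))"
    proof
      fix x
      have "(\<Sum>s\<in>faces L i. scaleF (c s) (delta s)) x = (\<Sum>s\<in>faces L i. (if s = x then c x else 0))"
        unfolding sum_fun_apply by (intro sum.cong) (auto simp: scaleF_def delta_def)
      also have "\<dots> = c x" using c fin by (auto simp: chains_def)
      finally show "c x = (\<Sum>s\<in>faces L i. scaleF (c s) (delta s)) x" by simp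
    qed
    also have "\<dots> \<in> VS.span ?E"
      by (intro VS.span_sum VS.span_scale VS.span_base) auto
    finally show "c \<in> VS.span ?E" .
  qed
  have E3: "VS.independent ?E"
    unfolding VS.independent_explicit_module
  proof (intro allI impI)
    fix t u v assume t: "finite t" "t \<subseteq> ?E" "(\<Sum>v\<in>t. scaleF (u v) v) = 0" "v \<in> t"
    then obtain s where s: "v = delta s" by auto
    have "0 = (\<Sum>v\<in>t. scaleF (u v) v) s" using t by simp
    also have "\<dots> = (\<Sum>w\<in>t. if w = v then u v else 0)"
      unfolding sum_fun_apply
    proof (intro sum.cong refl)
      fix w assume "w \<in> t"
      then obtain s' where s': "w = delta s'" using t by auto
      show "scaleF (u w) w s = (if w = v then u v else 0)"
      proof (cases "s' = s")
        case True
        then show ?thesis using s s' by (simp add: scaleF_def delta_def)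
      next
        case False
        then have "w \<noteq> v" using s s' delta_inj by (auto dest: injD)
        then show ?thesis using s' False by (simp add: scaleF_def delta_def)
      qed
    qed
    also have "\<dots> = u v" using t by simp
    finally show "u v = 0" by simp
  qed
  have "card ?E = card (faces L i)" using delta_inj by (meson card_image inj_on_subset subset_UNIV)
  then show ?thesis using VS.dim_unique[OF E1 E2 E3] by simp
qed

definition dclosed :: "'a set set \<Rightarrow> bool" where
  "dclosed L \<longleftrightarrow> finite L \<and> (\<forall>s\<in>L. \<forall>t. t \<subseteq> s \<longrightarrow> t \<in> L)"

lemma bd_chains: "bd L (Suc j) c \<in> chains L j"
  by (auto simp: chains_def)

lemma finite_faces: "finite L \<Longrightarrow> finite (faces L i)"
  by (simp add: faces_def)

lemma card_between:
  assumes L: "dclosed L" and u: "u \<in> faces L j" and s: "s \<in> faces L (Suc (Suc j))" and us: "u \<subseteq> s"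
  shows "card {t \<in> {t \<in> faces L (Suc j). u \<subseteq> t}. t \<subseteq> s} = 2"
proof -
  have fu: "finite u" "card u = j + 1" using u by (auto simp: faces_def intro: card_ge_0_finite)
  have fs: "finite s" "card s = j + 3" using s by (auto simp: faces_def intro: card_ge_0_finite)
  have eq: "{t \<in> {t \<in> faces L (Suc j). u \<subseteq> t}. t \<subseteq> s} = (\<lambda>x. insert x u) ` (s - u)"
  proof (intro equalityI subsetI)
    fix t assume t: "t \<in> {t \<in> {t \<in> faces L (Suc j). u \<subseteq> t}. t \<subseteq> s}"
    then have tL: "card t = j + 2" "u \<subseteq> t" "t \<subseteq> s" by (auto simp: faces_def)
    have ft: "finite t" using tL fs finite_subset by blast
    have "card (t - u) = 1" using tL ft fu by (simp add: card_Diff_subset)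
    then obtain x where x: "t - u = {x}" using card_1_singletonE by blast
    then have "t = insert x u" "x \<in> s - u" using tL by auto
    then show "t \<in> (\<lambda>x. insert x u) ` (s - u)" by auto
  next
    fix t assume "t \<in> (\<lambda>x. insert x u) ` (s - u)"
    then obtain x where x: "x \<in> s" "x \<notin> u" "t = insert x u" by auto
    have "t \<subseteq> s" using x us by auto
    then have "t \<in> L" using L s by (auto simp: dclosed_def faces_def)
    moreover have "card t = j + 2" using x fu by simp
    ultimately show "t \<in> {t \<in> {t \<in> faces L (Suc j). u \<subseteq> t}. t \<subseteq> s}"
      using x us by (auto simp: faces_def)
  qed
  have "inj_on (\<lambda>x. insert x u) (s - u)" by (auto simp: inj_on_def)
  then have "card ((\<lambda>x. insert x u) ` (s - u)) = card (s - u)" by (rule card_image)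
  also have "\<dots> = 2" using fs fu us by (simp add: card_Diff_subset)
  finally show ?thesis using eq by simp
qed

lemma bd_bd:
  assumes L: "dclosed L"
  shows "bd L (Suc j) (bd L (Suc (Suc j)) c) = 0"
proof
  fix u
  show "bd L (Suc j) (bd L (Suc (Suc j)) c) u = 0 u"
  proof (cases "u \<in> faces L j")
    case False then show ?thesis by simp
  next
    case True
    let ?T = "{t \<in> faces L (Suc j). u \<subseteq> t}"
    let ?F = "faces L (Suc (Suc j))"
    have fin: "finite ?T" "finite ?F" using L by (auto simp: dclosed_def faces_def)
    have "bd L (Suc j) (bd L (Suc (Suc j)) c) u = (\<Sum>t\<in>?T. bd L (Suc (Suc j)) c t)"
      using True by (simp only: bd.simps(2)[of L j] if_True)
    also have "\<dots> = (\<Sum>t\<in>?T. \<Sum>s\<in>{s \<in> ?F. t \<subseteq> s}. c s)"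
      by (rule sum.cong) (simp_all only: bd.simps(2) mem_Collect_eq if_True)
    also have "\<dots> = (\<Sum>s\<in>?F. \<Sum>t\<in>{t \<in> ?T. t \<subseteq> s}. c s)"
      by (rule sum.swap_restrict[OF fin])
    also have "\<dots> = (\<Sum>s\<in>?F. 0)"
    proof (intro sum.cong refl)
      fix s assume s: "s \<in> ?F"
      show "(\<Sum>t\<in>{t \<in> ?T. t \<subseteq> s}. c s) = 0"
      proof (cases "u \<subseteq> s")
        case True
        then have "card {t \<in> ?T. t \<subseteq> s} = 2" using card_between[OF L _ s] \<open>u \<in> faces L j\<close> by blast
        then show ?thesis by (simp only: sum_constant) simp
      next
        case False
        then have "{t \<in> ?T. t \<subseteq> s} = {}" by auto
        then show ?thesis by (simp only: sum.empty)
      qed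
    qed
    finally show ?thesis by simp
  qed
qed

lemma boundaries_sub_cycles:
  assumes "dclosed L"
  shows "boundaries L j \<subseteq> cycles L j"
proof
  fix x assume "x \<in> boundaries L j"
  then obtain c where x: "x = bd L (Suc j) c" unfolding boundaries_def by blast
  have "bd L j x = 0"
  proof (cases j)
    case 0 then show ?thesis by simp
  next
    case (Suc k) then show ?thesis using bd_bd[OF assms, of k c] x by simp
  qed
  then show "x \<in> cycles L j" using bd_chains x unfolding cycles_def by blast
qed

lemma bd_zero: "bd L i 0 = 0"
  by (cases i) (simp_all add: fun_eq_iff)

lemma rank_chain:
  assumes "finite L"
  shows "card (faces L i) = VS.dim (cycles L i) + VS.dim (bd L i ` chains L i)"
proof -
  have "VS.dim (chains L i) = VS.dim {x \<in> chains L i. bd L i x = 0} + VS.dim (bd L i ` chains L i)"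
    by (rule VS.rank_nullity_sub[OF lin_bd subspace_chains chains_span[OF assms]])
       (simp add: assms finite_faces)
  then show ?thesis using dim_chains[OF assms] by (simp add: cycles_def)
qed

lemma image_bd0: "bd L 0 ` chains L 0 = {0}"
  by (auto simp: chains_def)

lemma dim_bound_le:
  assumes "dclosed L"
  shows "VS.dim (boundaries L j) \<le> VS.dim (cycles L j)"
proof -
  have fL: "finite L" using assms by (simp add: dclosed_def)
  obtain W where W: "W \<subseteq> cycles L j" "VS.independent W" "cycles L j \<subseteq> VS.span W" "card W = VS.dim (cycles L j)"
    using VS.basis_exists by blast
  have "W \<subseteq> VS.span (delta ` faces L j)" using W(1) chains_span[OF fL] by (auto simp: cycles_def)
  then have fW: "finite W" using VS.independent_span_bound[OF _ W(2)] fL finite_faces by blast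
  have "boundaries L j \<subseteq> VS.span W" using boundaries_sub_cycles[OF assms] W(3) by auto
  then show ?thesis using VS.dim_le_card[OF _ fW] W(4) by simp
qed

lemma dim_bound_zero:
  assumes "faces L (Suc j) = {}"
  shows "VS.dim (boundaries L j) = 0"
proof -
  have "chains L (Suc j) = {0}" using assms by (auto simp: chains_def)
  then have "boundaries L j = {0}" unfolding boundaries_def by (simp only: image_insert image_empty bd_zero)
  then show ?thesis using VS.dim_unique[of "{}" "{0}" 0] VS.independent_empty by auto
qed


lemma dim_zero_space: "VS.dim {0} = 0"
  using VS.dim_unique[of "{}" "{0}" 0] VS.independent_empty by auto

lemma EP0:
  assumes L: "dclosed L" and e: "faces L 1 = {}"
  shows "betti L 0 = card (faces L 0)"
proof -
  have fL: "finite L" using L by (simp add: dclosed_def)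
  have "card (faces L 0) = VS.dim (cycles L 0)"
    using rank_chain[OF fL, of 0] by (simp only: image_bd0 dim_zero_space add_0_right)
  moreover have "VS.dim (boundaries L 0) = 0" using dim_bound_zero e by simp
  ultimately show ?thesis by (simp add: betti_def)
qed

lemma EP2:
  assumes L: "dclosed L" and e: "faces L 3 = {}"
  shows "int (betti L 0) - int (betti L 1) + int (betti L 2)
       = int (card (faces L 0)) - int (card (faces L 1)) + int (card (faces L 2))"
proof -
  have fL: "finite L" using L by (simp add: dclosed_def)
  have f0: "card (faces L 0) = VS.dim (cycles L 0)"
    using rank_chain[OF fL, of 0] by (simp only: image_bd0 dim_zero_space add_0_right)
  have f1: "card (faces L 1) = VS.dim (cycles L 1) + VS.dim (boundaries L 0)"
    using rank_chain[OF fL, of 1] by (simp add: boundaries_def)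
  have f2: "card (faces L 2) = VS.dim (cycles L 2) + VS.dim (boundaries L 1)"
    using rank_chain[OF fL, of 2] by (simp add: boundaries_def numeral_2_eq_2)
  have b2: "VS.dim (boundaries L 2) = 0" using dim_bound_zero[of L 2] e by (simp add: numeral_3_eq_3 numeral_2_eq_2)
  have l0: "VS.dim (boundaries L 0) \<le> VS.dim (cycles L 0)" by (rule dim_bound_le[OF L])
  have l1: "VS.dim (boundaries L 1) \<le> VS.dim (cycles L 1)" by (rule dim_bound_le[OF L])
  show ?thesis unfolding betti_def using f0 f1 f2 b2 l0 l1 by simp
qed

lemma dclosed_sphere: "dclosed (sphere_complex k)"
  unfolding dclosed_def sphere_complex_def
proof (intro conjI ballI allI impI)
  show "finite {s. s \<subseteq> {0..k + 1} \<and> s \<noteq> {0..k + 1}}"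
    by (rule finite_subset[of _ "Pow {0..k+1}"]) auto
next
  fix s t assume "s \<in> {s. s \<subseteq> {0..k + 1} \<and> s \<noteq> {0..k + 1}}" "t \<subseteq> s"
  then show "t \<in> {s. s \<subseteq> {0..k + 1} \<and> s \<noteq> {0..k + 1}}" by auto
qed

lemma faces_sphere_low:
  assumes "i \<le> k"
  shows "card (faces (sphere_complex k) i) = (k + 2) choose (i + 1)"
proof -
  have "faces (sphere_complex k) i = {s. s \<subseteq> {0..k+1} \<and> card s = i + 1}"
    using assms by (auto simp: faces_def sphere_complex_def)
  then show ?thesis using n_subsets[of "{0..k+1}" "i+1"] by simp
qed

lemma faces_sphere_top: "faces (sphere_complex k) (k + 1) = {}"
proof -
  { fix s assume "s \<subseteq> {0..k+1}" "card s = k + 2"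
    then have "s = {0..k+1}" by (intro card_subset_eq) auto }
  then show ?thesis by (auto simp: faces_def sphere_complex_def)
qed

lemma betti_sphere0: "betti (sphere_complex 0) 0 = 2"
  using EP0[OF dclosed_sphere, of 0] faces_sphere_top[of 0] faces_sphere_low[of 0 0] by simp

lemma euler_sphere2:
  "int (betti (sphere_complex 2) 0) - int (betti (sphere_complex 2) 1) + int (betti (sphere_complex 2) 2) = 2"
proof -
  have "faces (sphere_complex 2) 3 = {}" using faces_sphere_top[of 2] by simp
  from EP2[OF dclosed_sphere this] show ?thesis
    using faces_sphere_low[of 0 2] faces_sphere_low[of 1 2] faces_sphere_low[of 2 2]
    by (simp add: numeral_eq_Suc)
qed

lemma dclosed_K:
  assumes "simplicial_complex_on V K"
  shows "dclosed K"
  using assms unfolding simplicial_complex_on_def dclosed_def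
  by (meson finite_Pow_iff finite_subset)

lemma dclosed_link:
  assumes "dclosed K"
  shows "dclosed (link \<sigma> K)"
  using assms unfolding dclosed_def link_def
proof (intro conjI ballI allI impI)
  show "finite {\<tau> \<in> K. \<tau> \<inter> \<sigma> = {} \<and> \<tau> \<union> \<sigma> \<in> K}" using assms by (simp add: dclosed_def)
next
  fix s t assume "s \<in> {\<tau> \<in> K. \<tau> \<inter> \<sigma> = {} \<and> \<tau> \<union> \<sigma> \<in> K}" "t \<subseteq> s"
  moreover have "t \<union> \<sigma> \<subseteq> s \<union> \<sigma>" using \<open>t \<subseteq> s\<close> by auto
  ultimately show "t \<in> {\<tau> \<in> K. \<tau> \<inter> \<sigma> = {} \<and> \<tau> \<union> \<sigma> \<in> K}"
    using assms unfolding dclosed_def by blast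
qed

lemma faces_link:
  assumes K: "dclosed K" and fs: "finite \<sigma>"
  shows "card (faces (link \<sigma> K) i) = card {\<rho> \<in> faces K (i + card \<sigma>). \<sigma> \<subseteq> \<rho>}"
proof (rule bij_betw_same_card[of "\<lambda>\<tau>. \<tau> \<union> \<sigma>"], rule bij_betw_byWitness[of _ "\<lambda>\<rho>. \<rho> - \<sigma>"])
  show "\<forall>a\<in>faces (link \<sigma> K) i. a \<union> \<sigma> - \<sigma> = a"
    by (auto simp: faces_def link_def)
  show "\<forall>a'\<in>{\<rho> \<in> faces K (i + card \<sigma>). \<sigma> \<subseteq> \<rho>}. a' - \<sigma> \<union> \<sigma> = a'"
    by auto
  show "(\<lambda>\<tau>. \<tau> \<union> \<sigma>) ` faces (link \<sigma> K) i \<subseteq> {\<rho> \<in> faces K (i + card \<sigma>). \<sigma> \<subseteq> \<rho>}"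
  proof (rule image_subsetI)
    fix \<tau> assume t: "\<tau> \<in> faces (link \<sigma> K) i"
    then have "finite \<tau>" "card \<tau> = i + 1" "\<tau> \<inter> \<sigma> = {}" "\<tau> \<union> \<sigma> \<in> K"
      by (auto simp: faces_def link_def intro: card_ge_0_finite)
    then show "\<tau> \<union> \<sigma> \<in> {\<rho> \<in> faces K (i + card \<sigma>). \<sigma> \<subseteq> \<rho>}"
      using fs by (auto simp: faces_def card_Un_disjoint)
  qed
  show "(\<lambda>\<rho>. \<rho> - \<sigma>) ` {\<rho> \<in> faces K (i + card \<sigma>). \<sigma> \<subseteq> \<rho>} \<subseteq> faces (link \<sigma> K) i"
  proof (rule image_subsetI)
    fix \<rho> assume "\<rho> \<in> {\<rho> \<in> faces K (i + card \<sigma>). \<sigma> \<subseteq> \<rho>}"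
    then have r: "\<rho> \<in> faces K (i + card \<sigma>)" "\<sigma> \<subseteq> \<rho>" by auto
    then have "\<rho> \<in> K" "card \<rho> = i + card \<sigma> + 1" "finite \<rho>"
      by (auto simp: faces_def intro: card_ge_0_finite)
    moreover have "\<rho> - \<sigma> \<in> K" using K \<open>\<rho> \<in> K\<close> by (auto simp: dclosed_def)
    moreover have "\<rho> - \<sigma> \<union> \<sigma> = \<rho>" using r by auto
    ultimately show "\<rho> - \<sigma> \<in> faces (link \<sigma> K) i"
      using r fs by (auto simp: faces_def link_def card_Diff_subset)
  qed
qed

lemma double_count:
  assumes K: "dclosed K"
  shows "(\<Sum>\<sigma>\<in>faces K j. card {\<rho> \<in> faces K m. \<sigma> \<subseteq> \<rho>}) = card (faces K m) * ((m + 1) choose (j + 1))"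
proof -
  have fin: "finite (faces K j)" "finite (faces K m)" using K by (auto simp: dclosed_def faces_def)
  have "(\<Sum>\<sigma>\<in>faces K j. card {\<rho> \<in> faces K m. \<sigma> \<subseteq> \<rho>}) = (\<Sum>\<sigma>\<in>faces K j. \<Sum>\<rho>\<in>{\<rho> \<in> faces K m. \<sigma> \<subseteq> \<rho>}. 1)"
    by simp
  also have "\<dots> = (\<Sum>\<rho>\<in>faces K m. \<Sum>\<sigma>\<in>{\<sigma> \<in> faces K j. \<sigma> \<subseteq> \<rho>}. 1)"
    by (rule sum.swap_restrict[OF fin])
  also have "\<dots> = (\<Sum>\<rho>\<in>faces K m. (m + 1) choose (j + 1))"
  proof (intro sum.cong refl)
    fix \<rho> assume r: "\<rho> \<in> faces K m"
    then have fr: "finite \<rho>" "card \<rho> = m + 1" "\<rho> \<in> K" by (auto simp: faces_def intro: card_ge_0_finite)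
    have "{\<sigma> \<in> faces K j. \<sigma> \<subseteq> \<rho>} = {\<sigma>. \<sigma> \<subseteq> \<rho> \<and> card \<sigma> = j + 1}"
      using K fr by (auto simp: faces_def dclosed_def)
    then show "(\<Sum>\<sigma>\<in>{\<sigma> \<in> faces K j. \<sigma> \<subseteq> \<rho>}. 1) = (m + 1) choose (j + 1)"
      using n_subsets[OF fr(1), of "j+1"] fr by simp
  qed
  also have "\<dots> = card (faces K m) * ((m + 1) choose (j + 1))" by simp
  finally show ?thesis .
qed

lemma choose_vals: "(15::nat) choose 6 = 5005" "(15::nat) choose 7 = 6435"
  "(9::nat) choose 8 = 9" "(7::nat) choose 6 = 7" "(8::nat) choose 6 = 28" "(9::nat) choose 6 = 84"
  by (simp_all add: binomial_fact' fact_numeral)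

lemma complement_count:
  assumes SC: "simplicial_complex_on V K" and C: "complementarity V K" and k: "k \<le> card V"
  shows "card {s \<in> K. card s = k} + card {s \<in> K. card s = card V - k} = card V choose k"
proof -
  have fV: "finite V" and KV: "K \<subseteq> Pow V" using SC by (auto simp: simplicial_complex_on_def)
  let ?A = "{s \<in> K. card s = k}"
  let ?B = "{s. s \<subseteq> V \<and> card s = k \<and> s \<notin> K}"
  let ?D = "{s \<in> K. card s = card V - k}"
  have U: "{s. s \<subseteq> V \<and> card s = k} = ?A \<union> ?B" using KV by auto
  have fA: "finite ?A" "finite ?B"
    using fV KV by (auto intro: finite_subset[of _ "Pow V"])
  have BD: "card ?B = card ?D"
  proof (rule bij_betw_same_card[of "\<lambda>s. V - s"], rule bij_betw_byWitness[of _ "\<lambda>s. V - s"])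
    show "\<forall>a\<in>?B. V - (V - a) = a" by auto
    show "\<forall>a\<in>?D. V - (V - a) = a" using KV by auto
    show "(\<lambda>s. V - s) ` ?B \<subseteq> ?D"
    proof (rule image_subsetI)
      fix s assume s: "s \<in> ?B"
      have sV: "s \<subseteq> V" "card s = k" "s \<notin> K" using s by auto
      have "V - s \<in> K" using C sV unfolding complementarity_def by blast
      moreover have "card (V - s) = card V - k" using card_Diff_subset[OF finite_subset[OF sV(1) fV] sV(1)] sV by simp
      ultimately show "V - s \<in> ?D" by simp
    qed
    show "(\<lambda>s. V - s) ` ?D \<subseteq> ?B"
    proof (rule image_subsetI)
      fix s assume s: "s \<in> ?D"
      then have sV: "s \<subseteq> V" using KV by auto
      then have "V - s \<notin> K" using C s unfolding complementarity_def by blast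
      moreover have "card (V - s) = k" using s sV fV k by (simp add: card_Diff_subset finite_subset)
      ultimately show "V - s \<in> ?B" by auto
    qed
  qed
  have "card V choose k = card (?A \<union> ?B)" using n_subsets[OF fV, of k] U by simp
  also have "\<dots> = card ?A + card ?B" by (rule card_Un_disjoint) (use fA in auto)
  finally show ?thesis using BD by simp
qed

theorem proposition6p2:
  fixes V :: "'a set" and K :: "'a set set"
  assumes "simplicial_complex_on V K"
    and "card V = 15"
    and "F2_homology_manifold 8 K"
    and "complementarity V K"
  shows "card (faces K 8) = 490"
proof -
  have Kd: "dclosed K" using dclosed_K[OF assms(1)] .
  have fV: "finite V" and KV: "K \<subseteq> Pow V" using assms(1) by (auto simp: simplicial_complex_on_def)
  have finK: "\<And>s. s \<in> K \<Longrightarrow> finite s" using fV KV by (meson PowD finite_subset subsetD)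
  have M1: "\<forall>\<sigma>\<in>K. \<exists>\<tau>\<in>K. \<sigma> \<subseteq> \<tau> \<and> card \<tau> = 8 + 1"
    using assms(3) unfolding F2_homology_manifold_def by (rule conjunct1)
  have M2: "\<forall>\<sigma>\<in>K. \<sigma> \<noteq> {} \<and> card \<sigma> - 1 < 8 \<longrightarrow> F2_homology_sphere (link \<sigma> K) (8 - (card \<sigma> - 1) - 1)"
    using assms(3) unfolding F2_homology_manifold_def by (rule conjunct2)
  have le9: "card s \<le> 9" if "s \<in> K" for s
  proof -
    from M1 that have "\<exists>\<tau>\<in>K. s \<subseteq> \<tau> \<and> card \<tau> = 8 + 1" by (rule bspec)
    then obtain t where t: "t \<in> K" "s \<subseteq> t" "card t = 8 + 1" by (elim bexE conjE)
    show ?thesis using card_mono[OF finK[OF t(1)] t(2)] t(3) by simp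
  qed
  have empty9: "faces K m = {}" if m9: "m \<ge> 9" for m
  proof -
    have "card s \<noteq> m + 1" if "s \<in> K" for s using le9[OF that] m9 by linarith
    then show ?thesis unfolding faces_def by blast
  qed
  have sph: "F2_homology_sphere (link \<sigma> K) (8 - (card \<sigma> - 1) - 1)"
    if "\<sigma> \<in> K" "\<sigma> \<noteq> {}" "card \<sigma> - 1 < 8" for \<sigma>
    by (rule M2[rule_format, OF that(1) conjI[OF that(2) that(3)]])
  have fk: "faces K m = {s \<in> K. card s = m + 1}" for m by (simp add: faces_def)
  have c1: "card (faces K 5) + card (faces K 8) = 5005"
  proof -
    have "card {s \<in> K. card s = 6} + card {s \<in> K. card s = 15 - 6} = 5005"
      using complement_count[OF assms(1) assms(4), of 6] unfolding assms(2) choose_vals(1) by simp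
    then show ?thesis unfolding fk by simp
  qed
  have c2: "card (faces K 6) + card (faces K 7) = 6435"
  proof -
    have "card {s \<in> K. card s = 7} + card {s \<in> K. card s = 15 - 7} = 6435"
      using complement_count[OF assms(1) assms(4), of 7] unfolding assms(2) choose_vals(2) by simp
    then show ?thesis unfolding fk by simp
  qed
  have l7: "card {\<rho> \<in> faces K 8. \<sigma> \<subseteq> \<rho>} = 2" if s: "\<sigma> \<in> faces K 7" for \<sigma>
  proof -
    have s8: "\<sigma> \<in> K" "card \<sigma> = 8" "finite \<sigma>" using s finK by (auto simp: faces_def)
    have Ld: "dclosed (link \<sigma> K)" by (rule dclosed_link[OF Kd])
    have "card (faces (link \<sigma> K) 1) = 0"
      using faces_link[OF Kd s8(3), of 1] s8 empty9[of 9] by simp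
    then have e1: "faces (link \<sigma> K) 1 = {}"
      using Ld by (simp add: dclosed_def faces_def)
    have "\<sigma> \<noteq> {}" using s8 by auto
    then have "F2_homology_sphere (link \<sigma> K) 0" using sph[of \<sigma>] s8 by simp
    then have "betti (link \<sigma> K) 0 = 2" using betti_sphere0 by (simp add: F2_homology_sphere_def)
    then have "card (faces (link \<sigma> K) 0) = 2" using EP0[OF Ld e1] by simp
    then show ?thesis using faces_link[OF Kd s8(3), of 0] s8 by simp
  qed
  have c3: "2 * card (faces K 7) = 9 * card (faces K 8)"
  proof -
    have "(\<Sum>\<sigma>\<in>faces K 7. card {\<rho> \<in> faces K 8. \<sigma> \<subseteq> \<rho>}) = (\<Sum>\<sigma>\<in>faces K 7. 2)"
      using l7 by simp
    then show ?thesis using double_count[OF Kd, where j=7 and m=8] choose_vals by simp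
  qed
  have l5: "int (card {\<rho> \<in> faces K 6. \<sigma> \<subseteq> \<rho>}) - int (card {\<rho> \<in> faces K 7. \<sigma> \<subseteq> \<rho>})
      + int (card {\<rho> \<in> faces K 8. \<sigma> \<subseteq> \<rho>}) = 2" if s: "\<sigma> \<in> faces K 5" for \<sigma>
  proof -
    have s6: "\<sigma> \<in> K" "card \<sigma> = 6" "finite \<sigma>" using s finK by (auto simp: faces_def)
    have Ld: "dclosed (link \<sigma> K)" by (rule dclosed_link[OF Kd])
    have "card (faces (link \<sigma> K) 3) = 0"
      using faces_link[OF Kd s6(3), of 3] s6 empty9[of 9] by simp
    then have e3: "faces (link \<sigma> K) 3 = {}"
      using Ld by (simp add: dclosed_def faces_def)
    have "\<sigma> \<noteq> {}" using s6 by auto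
    then have "F2_homology_sphere (link \<sigma> K) 2" using sph[of \<sigma>] s6 by simp
    then have "int (betti (link \<sigma> K) 0) - int (betti (link \<sigma> K) 1) + int (betti (link \<sigma> K) 2) = 2"
      using euler_sphere2 by (simp add: F2_homology_sphere_def)
    then show ?thesis using EP2[OF Ld e3] faces_link[OF Kd s6(3), of 0] faces_link[OF Kd s6(3), of 1]
        faces_link[OF Kd s6(3), of 2] s6 by simp
  qed
  have c4: "7 * int (card (faces K 6)) - 28 * int (card (faces K 7)) + 84 * int (card (faces K 8))
      = 2 * int (card (faces K 5))"
  proof -
    have "(\<Sum>\<sigma>\<in>faces K 5. int (card {\<rho> \<in> faces K 6. \<sigma> \<subseteq> \<rho>}) - int (card {\<rho> \<in> faces K 7. \<sigma> \<subseteq> \<rho>})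
      + int (card {\<rho> \<in> faces K 8. \<sigma> \<subseteq> \<rho>})) = (\<Sum>\<sigma>\<in>faces K 5. 2)"
      using l5 by (intro sum.cong) auto
    then have "int (\<Sum>\<sigma>\<in>faces K 5. card {\<rho> \<in> faces K 6. \<sigma> \<subseteq> \<rho>})
       - int (\<Sum>\<sigma>\<in>faces K 5. card {\<rho> \<in> faces K 7. \<sigma> \<subseteq> \<rho>})
       + int (\<Sum>\<sigma>\<in>faces K 5. card {\<rho> \<in> faces K 8. \<sigma> \<subseteq> \<rho>}) = 2 * int (card (faces K 5))"
      by (simp add: sum.distrib sum_subtractf)
    then show ?thesis using double_count[OF Kd, where j=5 and m=6] double_count[OF Kd, where j=5 and m=7]
        double_count[OF Kd, where j=5 and m=8] choose_vals by (simp add: algebra_simps)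
  qed
  show ?thesis using c1 c2 c3 c4 by linarith
qed

end
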